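(* For each $r\in\{0,1,2,3,4,5\}$, the recession cone $C^r=\{x\in\mathbb R^6:\ \sigma\tilde c\cdot x\ge 0 \text{ for all } \tilde c\in\mathcal C_r,\ \sigma\in\mathfrak S_3\}$ of the polyhedron $Q^r$ is the cone generated by the five rays $[1,0,1,0,0,0]$, $[1,0,0,1,1,0]$, $[0,1,1,0,0,1]$, $[0,1,0,0,1,0]$, $[0,0,0,1,0,1]$ (which are the transition-count vectors of the loops $121$, $1231$, $1321$, $131$, $232$ respectively); in particular $C^0=C^1=\dots=C^5$.
   Context: Vectors of $\mathbb R^6$ are indexed by ordered pairs $ij$ of distinct elements of $\{1,2,3\}$ in the order $[x_{12},x_{13},x_{21},x_{23},x_{31},x_{32}]$; $\mathfrak S_3$ acts by $(\sigma c)_{ij}=c_{\sigma(i)\sigma(j)}$. Consider the following pairs $(\tilde c,a)$: $A_1=([1,0,0,0,0,0],0)$, $A_2=([1,1,-1,0,-1,0],-1)$, $B_{\mathrm{odd}}=([1,1,-1,-1,1,1],0)$, $B_{\mathrm{even}}=([3,1,-1,-1,-1,1],-1)$, $D_1=([2,-1,-1,-1,2,2],0)$, $D_2=([2,-1,-1,-1,2,2],-1)$, $D_3=([5,2,-4,-1,-1,2],-2)$, $D_0=([5,2,-4,-1,-1,2],-2)$. For $T=6k+r$ with $r\in\{0,\dots,5\}$, the applicable pairs are $A_1,A_2$; $B_{\mathrm{odd}}$ if $T$ is odd and $B_{\mathrm{even}}$ if $T$ is even; and $D_1$ if $T\equiv1 \pmod 3$, $D_2$ if $T\equiv 2\pmod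 3$, $D_3$ if $T\equiv 3\pmod 6$, $D_0$ if $T\equiv 0\pmod 6$ (this depends only on $r$). Let $\mathcal C_r$ be the set of the four vectors $\tilde c$ of the applicable pairs, and let $Q^r=\{x\in\mathbb R^6: \sigma\tilde c\cdot x\ge a \text{ for every applicable pair }(\tilde c,a)\text{ and every }\sigma\in\mathfrak S_3\}$. Writing $Q^r$ as a Minkowski sum $Q^r=P^r+C^r$ of a polytope and a cone, $C^r$ is the recession cone of $Q^r$, which equals the set displayed in the claim. *)

theory Defs
  imports "HOL-Analysis.Analysis"
begin

text \<open>Index set of R^6: ordered pairs ij of distinct elements of {1,2,3},
  in the order 12, 13, 21, 23, 31, 32.\<close>
datatype idx = I12 | I13 | I21 | I23 | I31 | I32

lemma UNIV_idx: "(UNIV :: idx set) = {I12, I13, I21, I23, I31, I32}"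
  using idx.exhaust by auto

instance idx :: finite
  by standard (simp add: UNIV_idx)

fun src :: "idx \<Rightarrow> nat" where
  "src I12 = 1" | "src I13 = 1" | "src I21 = 2" | "src I23 = 2" | "src I31 = 3" | "src I32 = 3"

fun tgt :: "idx \<Rightarrow> nat" where
  "tgt I12 = 2" | "tgt I13 = 3" | "tgt I21 = 1" | "tgt I23 = 3" | "tgt I31 = 1" | "tgt I32 = 2"

text \<open>The coordinate ij (only meaningful for distinct i, j in {1,2,3}).\<close>
definition pos :: "nat \<Rightarrow> nat \<Rightarrow> idx" where
  "pos i j = (THE k. src k = i \<and> tgt k = j)"

type_synonym vec6 = "real ^ idx"

definition mk6 :: "real \<Rightarrow> real \<Rightarrow> real \<Rightarrow> real \<Rightarrow> real \<Rightarrow> real \<Rightarrow> vec6" where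
  "mk6 a b c d e f = (\<chi> k. case k of I12 \<Rightarrow> a | I13 \<Rightarrow> b | I21 \<Rightarrow> c | I23 \<Rightarrow> d | I31 \<Rightarrow> e | I32 \<Rightarrow> f)"

definition act :: "(nat \<Rightarrow> nat) \<Rightarrow> vec6 \<Rightarrow> vec6" where
  "act \<sigma> c = (\<chi> k. c $ pos (\<sigma> (src k)) (\<sigma> (tgt k)))"

definition pA1 :: "vec6 \<times> real" where "pA1 = (mk6 1 0 0 0 0 0, 0)"
definition pA2 :: "vec6 \<times> real" where "pA2 = (mk6 1 1 (-1) 0 (-1) 0, -1)"
definition pBodd :: "vec6 \<times> real" where "pBodd = (mk6 1 1 (-1) (-1) 1 1, 0)"
definition pBeven :: "vec6 \<times> real" where "pBeven = (mk6 3 1 (-1) (-1) (-1) 1, -1)"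
definition pD1 :: "vec6 \<times> real" where "pD1 = (mk6 2 (-1) (-1) (-1) 2 2, 0)"
definition pD2 :: "vec6 \<times> real" where "pD2 = (mk6 2 (-1) (-1) (-1) 2 2, -1)"
definition pD3 :: "vec6 \<times> real" where "pD3 = (mk6 5 2 (-4) (-1) (-1) 2, -2)"
definition pD0 :: "vec6 \<times> real" where "pD0 = (mk6 5 2 (-4) (-1) (-1) 2, -2)"

text \<open>Applicable pairs for T = 6k + r (depends only on r).\<close>
definition applicable :: "nat \<Rightarrow> (vec6 \<times> real) set" where
  "applicable r = {pA1, pA2, if odd r then pBodd else pBeven,
     if r mod 3 = 1 then pD1 else if r mod 3 = 2 then pD2
     else if r mod 6 = 3 then pD3 else pD0}"

definition Cset :: "nat \<Rightarrow> vec6 set" where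
  "Cset r = fst ` applicable r"

text \<open>The polyhedron Q^r (not needed for the claim, recorded for context).\<close>
definition Qpoly :: "nat \<Rightarrow> vec6 set" where
  "Qpoly r = {x. \<forall>(c, a) \<in> applicable r. \<forall>\<sigma>. \<sigma> permutes {1,2,3} \<longrightarrow> act \<sigma> c \<bullet> x \<ge> a}"

definition Ccone :: "nat \<Rightarrow> vec6 set" where
  "Ccone r = {x. \<forall>c \<in> Cset r. \<forall>\<sigma>. \<sigma> permutes {1,2,3} \<longrightarrow> act \<sigma> c \<bullet> x \<ge> 0}"

end

theory Submission
  imports Defs
begin

lemma pos_src_tgt: "pos (src k) (tgt k) = k"
  unfolding pos_def
  apply (rule the_equality)
   apply simp
  apply (cases k; case_tac ka; simp)
  done

lemma pos_vals:
  "pos 1 2 = I12" "pos 1 3 = I13" "pos 2 1 = I21" "pos 2 3 = I23" "pos 3 1 = I31" "pos 3 2 = I32"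
  using pos_src_tgt[of I12] pos_src_tgt[of I13] pos_src_tgt[of I21] pos_src_tgt[of I23]
    pos_src_tgt[of I31] pos_src_tgt[of I32] by simp_all

lemma pos_vals':
  "pos (Suc 0) 2 = I12" "pos (Suc 0) 3 = I13" "pos 2 (Suc 0) = I21" "pos 3 (Suc 0) = I31"
  using pos_vals by simp_all

definition perm3 :: "nat \<Rightarrow> nat \<Rightarrow> nat \<Rightarrow> nat \<Rightarrow> nat" where
  "perm3 a b c = (\<lambda>n. if n = 1 then a else if n = 2 then b else if n = 3 then c else n)"

lemma perm3_permutes:
  assumes "(a,b,c) \<in> {(1,2,3),(1,3,2),(2,1,3),(2,3,1),(3,1,2),(3,2,1)}"
  shows "perm3 a b c permutes {1,2,3}"
  apply (rule bij_imp_permutes)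
  using assms
   apply (auto simp: perm3_def bij_betw_def inj_on_def)
  done

lemma perm_triple:
  assumes "\<sigma> permutes {1::nat,2,3}"
  shows "(\<sigma> 1, \<sigma> 2, \<sigma> 3) \<in> {(1,2,3),(1,3,2),(2,1,3),(2,3,1),(3,1,2),(3,2,1)}"
proof -
  have i: "inj \<sigma>" using assms permutes_inj by blast
  have m: "\<sigma> 1 \<in> {1,2,3}" "\<sigma> 2 \<in> {1,2,3}" "\<sigma> 3 \<in> {1,2,3}"
    using assms permutes_in_image by fastforce+
  have "\<sigma> 1 \<noteq> \<sigma> 2" "\<sigma> 1 \<noteq> \<sigma> 3" "\<sigma> 2 \<noteq> \<sigma> 3"
    using i by (auto dest: injD)
  then show ?thesis using m by auto
qed

lemma src_in: "src k \<in> {1,2,3}" and tgt_in: "tgt k \<in> {1,2,3}"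
  by (cases k; simp)+

lemma act_perm3:
  assumes "\<sigma> permutes {1::nat,2,3}"
  shows "act \<sigma> c = act (perm3 (\<sigma> 1) (\<sigma> 2) (\<sigma> 3)) c"
proof -
  have h: "\<And>n. n \<in> {1,2,3} \<Longrightarrow> perm3 (\<sigma> 1) (\<sigma> 2) (\<sigma> 3) n = \<sigma> n"
    by (auto simp: perm3_def)
  show ?thesis unfolding act_def using h[OF src_in] h[OF tgt_in] by simp
qed

lemma inner6: "(x::vec6) \<bullet> y = x$I12*y$I12 + x$I13*y$I13 + x$I21*y$I21 + x$I23*y$I23 + x$I31*y$I31 + x$I32*y$I32"
  by (simp add: inner_vec_def UNIV_idx)

lemma mk6_nth [simp]:
  "mk6 a b c d e f $ I12 = a" "mk6 a b c d e f $ I13 = b" "mk6 a b c d e f $ I21 = c"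
  "mk6 a b c d e f $ I23 = d" "mk6 a b c d e f $ I31 = e" "mk6 a b c d e f $ I32 = f"
  by (simp_all add: mk6_def)

lemma act_nth [simp]:
  "act \<sigma> c $ k = c $ pos (\<sigma> (src k)) (\<sigma> (tgt k))"
  by (simp add: act_def)

lemma act_perm3_gen:
  "act (perm3 a b c) v = mk6 (v$pos a b) (v$pos a c) (v$pos b a) (v$pos b c) (v$pos c a) (v$pos c b)"
  unfolding vec_eq_iff by (rule allI, case_tac i) (simp_all add: perm3_def)

lemma inner_mk6: "mk6 a b c d e f \<bullet> mk6 a' b' c' d' e' f' = a*a'+b*b'+c*c'+d*d'+e*e'+f*f'"
  by (simp add: inner6)

lemma Cset_cases:
  assumes "r < (6::nat)" "c \<in> Cset r"
  shows "c \<in> {mk6 1 0 0 0 0 0, mk6 1 1 (-1) 0 (-1) 0, mk6 1 1 (-1) (-1) 1 1,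
     mk6 3 1 (-1) (-1) (-1) 1, mk6 2 (-1) (-1) (-1) 2 2, mk6 5 2 (-4) (-1) (-1) 2}"
  using assms
  by (auto simp: Cset_def applicable_def pA1_def pA2_def pBodd_def pBeven_def pD1_def pD2_def
      pD3_def pD0_def)

lemma gen_ok:
  assumes "r < (6::nat)" "c \<in> Cset r" "\<sigma> permutes {1,2,3}"
    "g \<in> {mk6 1 0 1 0 0 0, mk6 1 0 0 1 1 0, mk6 0 1 1 0 0 1, mk6 0 1 0 0 1 0, mk6 0 0 0 1 0 1}"
  shows "act \<sigma> c \<bullet> g \<ge> 0"
proof -
  have t: "(\<sigma> 1, \<sigma> 2, \<sigma> 3) \<in> {(1,2,3),(1,3,2),(2,1,3),(2,3,1),(3,1,2),(3,2,1)}"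
    using perm_triple[OF assms(3)] .
  have e: "act \<sigma> c = act (perm3 (\<sigma> 1) (\<sigma> 2) (\<sigma> 3)) c" using act_perm3[OF assms(3)] .
  show ?thesis
    using t Cset_cases[OF assms(1,2)] assms(4) unfolding e act_perm3_gen
    apply (elim insertE emptyE)
    apply (simp_all only: prod.inject)
    apply (elim conjE)
    apply (simp_all add: inner_mk6 pos_vals pos_vals')
    done
qed

lemma cone_Ccone: "convex_cone (Ccone r)"
  unfolding convex_cone_iff Ccone_def
  by (auto simp: inner_add_right)

lemma A_in: "fst pA1 \<in> Cset r" "fst pA2 \<in> Cset r"
  by (auto simp: Cset_def applicable_def)

theorem proposition13:
  assumes "r < (6::nat)"
  shows "Ccone r = convex_cone hull {mk6 1 0 1 0 0 0, mk6 1 0 0 1 1 0, mk6 0 1 1 0 0 1,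
                              mk6 0 1 0 0 1 0, mk6 0 0 0 1 0 1}" (is "_ = convex_cone hull ?G")
proof
  show "convex_cone hull ?G \<subseteq> Ccone r"
    apply (rule hull_minimal)
     apply (auto simp: Ccone_def intro!: gen_ok[OF assms])[1]
    by (rule cone_Ccone)
next
  show "Ccone r \<subseteq> convex_cone hull ?G"
  proof
    fix x assume x: "x \<in> Ccone r"
    have h: "act (perm3 a b c) cc \<bullet> x \<ge> 0"
      if "(a,b,c) \<in> {(1,2,3),(1,3,2),(2,1,3),(2,3,1),(3,1,2),(3,2,1)}" "cc \<in> Cset r" for a b c cc
      using x perm3_permutes[OF that(1)] that(2) unfolding Ccone_def by blast
    note h1 = h[OF _ A_in(1)] and h2 = h[OF _ A_in(2)]
    have ineqs: "x$I12 \<ge> 0" "x$I13 \<ge> 0" "x$I21 \<ge> 0" "x$I23 \<ge> 0" "x$I31 \<ge> 0" "x$I32 \<ge> 0"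
      "x$I12 + x$I13 = x$I21 + x$I31" "x$I21 + x$I23 = x$I12 + x$I32"
      using h1[of 1 2 3] h1[of 1 3 2] h1[of 2 1 3] h1[of 2 3 1] h1[of 3 1 2] h1[of 3 2 1]
        h2[of 1 2 3] h2[of 1 3 2] h2[of 2 1 3] h2[of 2 3 1] h2[of 3 1 2] h2[of 3 2 1]
      by (simp_all add: inner6 perm3_def pos_vals pos_vals' pA1_def pA2_def)
    define d where "d = x$I12 - x$I21"
    define a where "a = max d 0"
    define b where "b = max (- d) 0"
    have xe: "x = (x$I12 - a) *\<^sub>R mk6 1 0 1 0 0 0 + a *\<^sub>R mk6 1 0 0 1 1 0 + b *\<^sub>R mk6 0 1 1 0 0 1
       + (x$I13 - b) *\<^sub>R mk6 0 1 0 0 1 0 + (x$I23 - a) *\<^sub>R mk6 0 0 0 1 0 1"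
      unfolding vec_eq_iff
    proof
      fix k show "x $ k = ((x$I12 - a) *\<^sub>R mk6 1 0 1 0 0 0 + a *\<^sub>R mk6 1 0 0 1 1 0 + b *\<^sub>R mk6 0 1 1 0 0 1
       + (x$I13 - b) *\<^sub>R mk6 0 1 0 0 1 0 + (x$I23 - a) *\<^sub>R mk6 0 0 0 1 0 1) $ k"
        using ineqs by (cases k) (auto simp: a_def b_def d_def max_def)
    qed
    have nn: "x$I12 - a \<ge> 0" "a \<ge> 0" "b \<ge> 0" "x$I13 - b \<ge> 0" "x$I23 - a \<ge> 0"
      using ineqs by (auto simp: a_def b_def d_def max_def)
    have mem: "t *\<^sub>R v \<in> convex_cone hull ?G" if "t \<ge> 0" "v \<in> ?G" for t v
      by (rule convex_cone_scaleR[OF convex_cone_convex_cone_hull that(1) hull_inc[OF that(2)]])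
    show "x \<in> convex_cone hull ?G"
      apply (subst xe)
      apply (intro convex_cone_hull_add mem nn)
      by auto
  qed
qed

end
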